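(* Let $P\in\mathfrak N^{Seg}_2$ with $h_P\ge2$ and $P(0)\cup P(1)$ of type $3C$. Then $P$ has a retract $R$ with $R(0)\cup R(1)$ a 4-crown if and only if $P(2\to h_P)$ has a retract $T$ whose set of minimal elements $T(0)$ is a 2-element antichain.
   Context: All posets are finite; $h_P$ is the height; level sets $P(0)=\min P$, $P(k+1)=\min(P\setminus\bigcup_{i\le k}P(i))$; $P(k\to\ell)=\bigcup_{i=k}^\ell P(i)$ as induced subposet. Level sets of a retract refer to its own levels. A retract is the image of an idempotent order-preserving self-map. A 4-crown is the ordinal sum of two 2-element antichains; type $3C$ means three disjoint 2-element chains with no further comparabilities; a 6-crown is $x_0<y_0>x_1<y_1>x_2<y_2>x_0$ with no other comparabilities. A section of width three is a poset $P$ of height $h_P\ge1$ with carrier $\{c_{k,j}:k\in[0,h_P],j\in\{0,1,2\}\}$ such that: $c_{0,j}<\dots<c_{h_P,j}$ for each $j$; each $\{c_{k,0},c_{k,1},c_{k,2}\}$ is an antichain; $c_{k,i}<c_{\ell,j}\Rightarrow c_{k,i+1}<c_{\ell,j+1}$ (indices mod 3); and for no $k$ is every point of $P(k)$ below every point of $P(k+1)$. It is nice if for all $x<y$: $\{z:z>x\}\not\subseteq\{z:z\ge y\}$ and $\{z:z<y\}\not\subseteq\{z:z\le x\}$. $\mathfrak N_2$ is the class of nice sections of width three of height $\ge2$ with horizon 2 (every point of $P(k)$ is below every point of $P(\ell)$ whenever $\ell\ge k+2$). $\mathfrak N^{Seg}_2=\{P(1\to h_P-1):P\in\mathfrak N_2\}$.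 *)

theory Defs
  imports Main
begin

text \<open>A finite poset is a carrier set A together with a strict order r; only pairs with
both components in the carrier are ever consulted, so (A, r) denotes the induced subposet
on A.\<close>

definition is_poset :: "'a set \<Rightarrow> 'a rel \<Rightarrow> bool" where
  "is_poset A r \<longleftrightarrow> finite A \<and> (\<forall>x\<in>A. (x, x) \<notin> r) \<and>
     (\<forall>x\<in>A. \<forall>y\<in>A. \<forall>z\<in>A. (x, y) \<in> r \<longrightarrow> (y, z) \<in> r \<longrightarrow> (x, z) \<in> r)"

definition minset :: "'a set \<Rightarrow> 'a rel \<Rightarrow> 'a set" where
  "minset A r = {x \<in> A. \<not> (\<exists>y\<in>A. (y, x) \<in> r)}"

fun rest :: "'a set \<Rightarrow> 'a rel \<Rightarrow> nat \<Rightarrow> 'a set" where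
  "rest A r 0 = A"
| "rest A r (Suc k) = rest A r k - minset (rest A r k) r"

definition level :: "'a set \<Rightarrow> 'a rel \<Rightarrow> nat \<Rightarrow> 'a set" where
  "level A r k = minset (rest A r k) r"

definition height :: "'a set \<Rightarrow> 'a rel \<Rightarrow> nat" where
  "height A r = Max {k. level A r k \<noteq> {}}"

text \<open>P(k -> l), the union of levels k..l (as induced subposet with the same r)\<close>
definition seg :: "'a set \<Rightarrow> 'a rel \<Rightarrow> nat \<Rightarrow> nat \<Rightarrow> 'a set" where
  "seg A r k l = (\<Union>i\<in>{k..l}. level A r i)"

definition iso :: "'a set \<Rightarrow> 'a rel \<Rightarrow> 'b set \<Rightarrow> 'b rel \<Rightarrow> bool" where
  "iso A r B s \<longleftrightarrow> (\<exists>f. bij_betw f A B \<and>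
     (\<forall>x\<in>A. \<forall>y\<in>A. (x, y) \<in> r \<longleftrightarrow> (f x, f y) \<in> s))"

definition is_retract :: "'a set \<Rightarrow> 'a rel \<Rightarrow> 'a set \<Rightarrow> bool" where
  "is_retract A r R \<longleftrightarrow> (\<exists>f. (\<forall>x\<in>A. f x \<in> A) \<and> f ` A = R \<and>
     (\<forall>x\<in>A. f (f x) = f x) \<and>
     (\<forall>x\<in>A. \<forall>y\<in>A. (x, y) \<in> r \<longrightarrow> f x = f y \<or> (f x, f y) \<in> r))"

text \<open>Model posets: three disjoint 2-chains (type 3C) and the 4-crown.\<close>
definition C3_carrier :: "nat set" where "C3_carrier = {0..5}"
definition C3_rel :: "nat rel" where "C3_rel = {(0,1), (2,3), (4,5)}"
definition crown4_carrier :: "nat set" where "crown4_carrier = {0..3}"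
definition crown4_rel :: "nat rel" where "crown4_rel = {(0,2), (0,3), (1,2), (1,3)}"

definition section3 :: "'a set \<Rightarrow> 'a rel \<Rightarrow> bool" where
  "section3 A r \<longleftrightarrow> is_poset A r \<and> height A r \<ge> 1 \<and>
    (\<exists>c :: nat \<Rightarrow> nat \<Rightarrow> 'a.
       bij_betw (\<lambda>(k, j). c k j) ({0..height A r} \<times> {0..<3}) A \<and>
       (\<forall>j<3. \<forall>k<height A r. (c k j, c (Suc k) j) \<in> r) \<and>
       (\<forall>k\<le>height A r. \<forall>i<3. \<forall>j<3. (c k i, c k j) \<notin> r) \<and>
       (\<forall>k\<le>height A r. \<forall>l\<le>height A r. \<forall>i<3. \<forall>j<3.
          (c k i, c l j) \<in> r \<longrightarrow> (c k ((i + 1) mod 3), c l ((j + 1) mod 3)) \<in> r)) \<and>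
    (\<forall>k<height A r. \<not> (\<forall>x\<in>level A r k. \<forall>y\<in>level A r (Suc k). (x, y) \<in> r))"

definition nice :: "'a set \<Rightarrow> 'a rel \<Rightarrow> bool" where
  "nice A r \<longleftrightarrow> (\<forall>x\<in>A. \<forall>y\<in>A. (x, y) \<in> r \<longrightarrow>
     \<not> ({z\<in>A. (x, z) \<in> r} \<subseteq> {z\<in>A. z = y \<or> (y, z) \<in> r}) \<and>
     \<not> ({z\<in>A. (z, y) \<in> r} \<subseteq> {z\<in>A. z = x \<or> (z, x) \<in> r}))"

definition horizon2 :: "'a set \<Rightarrow> 'a rel \<Rightarrow> bool" where
  "horizon2 A r \<longleftrightarrow> (\<forall>k l. k + 2 \<le> l \<longrightarrow>
     (\<forall>x\<in>level A r k. \<forall>y\<in>level A r l. (x, y) \<in> r))"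

definition N2 :: "'a set \<Rightarrow> 'a rel \<Rightarrow> bool" where
  "N2 A r \<longleftrightarrow> section3 A r \<and> nice A r \<and> height A r \<ge> 2 \<and> horizon2 A r"

text \<open>Membership in N_2^Seg, up to isomorphism (representatives of N_2 taken on nat,
which is no restriction since every finite poset has an isomorphic copy on nat).\<close>
definition NSeg2 :: "'a set \<Rightarrow> 'a rel \<Rightarrow> bool" where
  "NSeg2 A r \<longleftrightarrow> (\<exists>(B :: nat set) s. N2 B s \<and> iso A r (seg B s 1 (height B s - 1)) s)"

end

theory Submission
  imports Defs
begin


lemma minset_sub: "minset A r \<subseteq> A" by (auto simp: minset_def)
lemma rest_sub: "rest A r k \<subseteq> A"
  by (induction k) auto
lemma rest_antimono: "j \<le> k \<Longrightarrow> rest A r k \<subseteq> rest A r j"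
  by (rule lift_Suc_antimono_le[of "rest A r"]) auto
lemma level_sub_rest: "level A r k \<subseteq> rest A r k"
  by (auto simp: level_def minset_def)
lemma level_disj: "x \<in> level A r k \<Longrightarrow> x \<notin> rest A r (Suc k)"
  by (auto simp: level_def)

lemma rest_upclosed: "x \<in> rest A r k \<Longrightarrow> y \<in> A \<Longrightarrow> (x,y) \<in> r \<Longrightarrow> y \<in> rest A r k"
proof (induction k)
  case 0 then show ?case by simp
next
  case (Suc k)
  then show ?case by (auto simp: minset_def)
qed

lemma is_poset_sub: "is_poset A r \<Longrightarrow> Y \<subseteq> A \<Longrightarrow> is_poset Y r"
  unfolding is_poset_def by (meson finite_subset subsetD)

lemma ex_min_below:
  assumes P: "is_poset Y r" and y: "y \<in> Y"
  shows "\<exists>m\<in>minset Y r. m = y \<or> (m,y) \<in> r"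
proof -
  define r' where "r' = r \<inter> (Y \<times> Y)"
  have irr: "\<And>x. x \<in> Y \<Longrightarrow> (x,x) \<notin> r" using P unfolding is_poset_def by blast
  have tr: "\<And>a b c. a \<in> Y \<Longrightarrow> b \<in> Y \<Longrightarrow> c \<in> Y \<Longrightarrow> (a,b) \<in> r \<Longrightarrow> (b,c) \<in> r \<Longrightarrow> (a,c) \<in> r"
    using P unfolding is_poset_def by blast
  have "trans r'" unfolding r'_def trans_def using tr by blast
  then have "r'\<^sup>+ = r'" by simp
  then have acyc: "acyclic r'" unfolding acyclic_def r'_def using irr by auto
  have fin: "finite r'" unfolding r'_def using P unfolding is_poset_def by auto
  have wf: "wf r'" using fin acyc wf_iff_acyclic_if_finite by blast
  define Q where "Q = {z\<in>Y. z = y \<or> (z,y) \<in> r}"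
  have "y \<in> Q" using y unfolding Q_def by simp
  then obtain m where m: "m \<in> Q" and mn: "\<And>z. (z, m) \<in> r' \<Longrightarrow> z \<notin> Q"
    using wfE_min[OF wf] by metis
  have mY: "m \<in> Y" using m unfolding Q_def by simp
  have "m \<in> minset Y r"
  proof -
    have "\<not> (\<exists>z\<in>Y. (z,m) \<in> r)"
    proof
      assume "\<exists>z\<in>Y. (z,m) \<in> r"
      then obtain z where z: "z \<in> Y" "(z,m) \<in> r" by blast
      then have "(z,m) \<in> r'" using mY unfolding r'_def by simp
      then have "z \<notin> Q" by (rule mn)
      moreover have "z \<in> Q"
      proof -
        have "z = y \<or> (z,y) \<in> r"
        proof (cases "m = y")
          case True then show ?thesis using z by simp
        next
          case False then have "(m,y) \<in> r" using m unfolding Q_def by simp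
          then show ?thesis using tr[OF z(1) mY y] z by simp
        qed
        then show ?thesis using z unfolding Q_def by simp
      qed
      ultimately show False by simp
    qed
    then show ?thesis using mY unfolding minset_def by simp
  qed
  then show ?thesis using m unfolding Q_def by blast
qed

lemma rest_nonempty_level:
  assumes "is_poset A r" "rest A r k \<noteq> {}"
  shows "level A r k \<noteq> {}"
proof -
  obtain y where y: "y \<in> rest A r k" using assms by auto
  have "is_poset (rest A r k) r" using assms(1) is_poset_sub rest_sub by metis
  then obtain m where "m \<in> minset (rest A r k) r" using ex_min_below y by metis
  then show ?thesis unfolding level_def by auto
qed

lemma rest_card:
  assumes "is_poset A r"
  shows "rest A r k = {} \<or> card (rest A r k) + k \<le> card A"
proof (induction k)
  case 0 then show ?case by simp
next
  case (Suc k)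
  show ?case
  proof (cases "rest A r k = {}")
    case True
    then show ?thesis by simp
  next
    case False
    have "finite A" using assms unfolding is_poset_def by simp
    then have fin: "finite (rest A r k)" using rest_sub finite_subset by metis
    have ne: "level A r k \<noteq> {}" using rest_nonempty_level[OF assms False] .
    have eq: "rest A r (Suc k) = rest A r k - level A r k" by (simp add: level_def)
    have "card (rest A r (Suc k)) < card (rest A r k)"
    proof -
      have fl: "finite (level A r k)" using fin level_sub_rest[of A r k] finite_subset by blast
      have "card (rest A r k - level A r k) = card (rest A r k) - card (level A r k)"
        using card_Diff_subset[OF fl level_sub_rest[of A r k]] .
      moreover have "card (level A r k) > 0" using fl ne by (simp add: card_gt_0_iff)
      moreover have "card (level A r k) \<le> card (rest A r k)" using card_mono[OF fin level_sub_rest[of A r k]] .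
      ultimately show ?thesis unfolding eq by linarith
    qed
    moreover have "card (rest A r k) + k \<le> card A" using Suc.IH False by simp
    ultimately show ?thesis by simp
  qed
qed



lemma rest_empty:
  assumes "is_poset A r" "card A < k"
  shows "rest A r k = {}"
proof (rule ccontr)
  assume ne: "rest A r k \<noteq> {}"
  have "finite A" using assms unfolding is_poset_def by simp
  then have "finite (rest A r k)" using rest_sub finite_subset by metis
  then have "card (rest A r k) > 0" using ne by (simp add: card_gt_0_iff)
  moreover have "card (rest A r k) + k \<le> card A" using rest_card[OF assms(1), of k] ne by simp
  ultimately show False using assms(2) by linarith
qed

lemma level_le_height:
  assumes "is_poset A r" "x \<in> level A r k"
  shows "k \<le> height A r"
proof -
  have sub: "{k. level A r k \<noteq> {}} \<subseteq> {..card A}"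
  proof
    fix j assume "j \<in> {k. level A r k \<noteq> {}}"
    then have "rest A r j \<noteq> {}" using level_sub_rest[of A r j] by auto
    then show "j \<in> {..card A}" using rest_empty[OF assms(1), of j] by (cases "card A < j") auto
  qed
  have "finite {k. level A r k \<noteq> {}}" using finite_subset[OF sub] by simp
  moreover have "k \<in> {k. level A r k \<noteq> {}}" using assms(2) by auto
  ultimately show ?thesis unfolding height_def by (rule Max_ge)
qed

lemma mem_rest_aux:
  "x \<in> rest A r k \<Longrightarrow> x \<notin> rest A r (k + n) \<Longrightarrow> \<exists>i\<ge>k. x \<in> level A r i"
proof (induction n arbitrary: k)
  case 0 then show ?case by simp
next
  case (Suc n)
  show ?case
  proof (cases "x \<in> rest A r (Suc k)")
    case True
    have "x \<notin> rest A r (Suc k + n)" using Suc.prems(2) by simp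
    then obtain i where "i \<ge> Suc k" "x \<in> level A r i" using Suc.IH[OF True] by blast
    then show ?thesis by (intro exI[of _ i]) simp
  next
    case False
    then have "x \<in> level A r k" using Suc.prems(1) unfolding level_def by simp
    then show ?thesis by blast
  qed
qed

lemma mem_rest_level:
  assumes "is_poset A r" "x \<in> rest A r k"
  shows "\<exists>i. k \<le> i \<and> i \<le> height A r \<and> x \<in> level A r i"
proof -
  have "rest A r (k + Suc (card A)) = {}" using rest_empty[OF assms(1), of "k + Suc (card A)"] by simp
  then obtain i where "i \<ge> k" "x \<in> level A r i" using mem_rest_aux[OF assms(2), of "Suc (card A)"] by blast
  then show ?thesis using level_le_height[OF assms(1)] by blast
qed

lemma level_in_rest: "k \<le> i \<Longrightarrow> x \<in> level A r i \<Longrightarrow> x \<in> rest A r k"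
  using level_sub_rest[of A r i] rest_antimono[of k i A r] by blast

lemma seg_eq_rest:
  assumes "is_poset A r"
  shows "seg A r k (height A r) = rest A r k"
proof
  show "seg A r k (height A r) \<subseteq> rest A r k"
  proof
    fix x assume "x \<in> seg A r k (height A r)"
    then obtain i where "k \<le> i" "x \<in> level A r i" unfolding seg_def by auto
    then show "x \<in> rest A r k" using level_in_rest by metis
  qed
  show "rest A r k \<subseteq> seg A r k (height A r)"
  proof
    fix x assume "x \<in> rest A r k"
    then obtain i where "k \<le> i" "i \<le> height A r" "x \<in> level A r i" using mem_rest_level[OF assms] by blast
    then show "x \<in> seg A r k (height A r)" unfolding seg_def by auto
  qed
qed

lemma seg_mid:
  assumes "is_poset A r" "1 \<le> h"
  shows "seg A r 1 (h - 1) = rest A r 1 - rest A r h"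
proof
  show "seg A r 1 (h - 1) \<subseteq> rest A r 1 - rest A r h"
  proof
    fix x assume "x \<in> seg A r 1 (h - 1)"
    then obtain i where i0: "i \<in> {1..h-1}" and i3: "x \<in> level A r i" unfolding seg_def by blast
    have i1: "1 \<le> i" and i2: "Suc i \<le> h" using i0 assms(2) by auto
    have "x \<in> rest A r 1" using level_in_rest[OF i1 i3] .
    moreover have "x \<notin> rest A r h"
    proof
      assume "x \<in> rest A r h"
      then have "x \<in> rest A r (Suc i)" using rest_antimono[OF i2, of A r] by blast
      then show False using level_disj[OF i3] by simp
    qed
    ultimately show "x \<in> rest A r 1 - rest A r h" by simp
  qed
  show "rest A r 1 - rest A r h \<subseteq> seg A r 1 (h - 1)"
  proof
    fix x assume x: "x \<in> rest A r 1 - rest A r h"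
    then have "x \<in> rest A r 1" by simp
    then obtain i where i: "1 \<le> i" "x \<in> level A r i" using mem_rest_level[OF assms(1)] by blast
    have "i < h"
    proof (rule ccontr)
      assume "\<not> i < h"
      then have "h \<le> i" by simp
      then have "x \<in> rest A r h" using level_in_rest i(2) by metis
      then show False using x by simp
    qed
    then have "i \<in> {1..h-1}" using i(1) by auto
    then show "x \<in> seg A r 1 (h - 1)" unfolding seg_def using i(2) by blast
  qed
qed

lemma rest_rest: "rest (rest X r m) r k = rest X r (m + k)"
  by (induction k) auto

lemma minset_diff:
  assumes "Y \<subseteq> X" "\<forall>x\<in>D. \<forall>y\<in>X. (x,y) \<in> r \<longrightarrow> y \<in> D"
  shows "minset (Y - D) r = minset Y r - D"
  using assms unfolding minset_def by blast

lemma rest_diff: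
  assumes "\<And>x y. x \<in> D \<Longrightarrow> y \<in> X \<Longrightarrow> (x,y) \<in> r \<Longrightarrow> y \<in> D"
  shows "rest (X - D) r k = rest X r k - D"
proof (induction k)
  case 0 then show ?case by simp
next
  case (Suc k)
  have "minset (rest X r k - D) r = minset (rest X r k) r - D"
    using minset_diff[of "rest X r k" X D r, OF rest_sub] assms by blast
  then show ?case using Suc by auto
qed

lemma level_diff:
  assumes "\<And>x y. x \<in> D \<Longrightarrow> y \<in> X \<Longrightarrow> (x,y) \<in> r \<Longrightarrow> y \<in> D"
  shows "level (X - D) r k = level X r k - D"
proof -
  have "level (X - D) r k = minset (rest X r k - D) r" unfolding level_def using rest_diff[OF assms] by simp
  also have "\<dots> = minset (rest X r k) r - D" using minset_diff[of "rest X r k" X D r, OF rest_sub] assms by blast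
  finally show ?thesis unfolding level_def .
qed



lemma minset_image:
  assumes "Y \<subseteq> A" "\<forall>x\<in>A. \<forall>y\<in>A. (x, y) \<in> r \<longleftrightarrow> (f x, f y) \<in> s"
  shows "f ` minset Y r = minset (f ` Y) s"
proof -
  have R: "\<And>x y. x \<in> Y \<Longrightarrow> y \<in> Y \<Longrightarrow> (x, y) \<in> r \<longleftrightarrow> (f x, f y) \<in> s"
    using assms by blast
  show ?thesis
  proof
    show "f ` minset Y r \<subseteq> minset (f ` Y) s"
    proof
      fix z assume "z \<in> f ` minset Y r"
      then obtain x where x: "x \<in> Y" "\<forall>y\<in>Y. (y,x) \<notin> r" "z = f x" unfolding minset_def by blast
      have "\<forall>w\<in>f ` Y. (w, z) \<notin> s"
      proof
        fix w assume "w \<in> f ` Y"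
        then obtain y where y: "y \<in> Y" "w = f y" by blast
        have "(y,x) \<notin> r" using x y by blast
        then show "(w,z) \<notin> s" using R[OF y(1) x(1)] x y by simp
      qed
      then show "z \<in> minset (f ` Y) s" using x unfolding minset_def by blast
    qed
    show "minset (f ` Y) s \<subseteq> f ` minset Y r"
    proof
      fix z assume z: "z \<in> minset (f ` Y) s"
      then obtain x where x: "x \<in> Y" "z = f x" unfolding minset_def by blast
      have "\<forall>y\<in>Y. (y,x) \<notin> r"
      proof
        fix y assume y: "y \<in> Y"
        have "(f y, z) \<notin> s" using z y unfolding minset_def by blast
        then show "(y,x) \<notin> r" using R[OF y x(1)] x by simp
      qed
      then show "z \<in> f ` minset Y r" using x unfolding minset_def by blast
    qed
  qed
qed

lemma rest_image:
  assumes "bij_betw f A B" "\<forall>x\<in>A. \<forall>y\<in>A. (x, y) \<in> r \<longleftrightarrow> (f x, f y) \<in> s"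
  shows "f ` rest A r k = rest B s k"
proof (induction k)
  case 0 then show ?case using assms(1) by (simp add: bij_betw_def)
next
  case (Suc k)
  have inj: "inj_on f A" using assms(1) by (simp add: bij_betw_def)
  have s1: "rest A r k - minset (rest A r k) r \<subseteq> A" using rest_sub[of A r k] by (rule subset_trans[OF Diff_subset])
  have s2: "minset (rest A r k) r \<subseteq> A" using minset_sub rest_sub by (metis subset_trans)
  have e1: "f ` rest A r (Suc k) = f ` rest A r k - f ` minset (rest A r k) r"
    using inj_on_image_set_diff[OF inj s1 s2] by (simp only: rest.simps)
  have e2: "f ` minset (rest A r k) r = minset (rest B s k) s"
    using minset_image[OF rest_sub assms(2), of r k] Suc.IH by (simp only:)
  have e3: "rest B s (Suc k) = rest B s k - minset (rest B s k) s" by simp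
  show ?case unfolding e3 e1 e2 Suc.IH ..
qed

lemma level_image:
  assumes "bij_betw f A B" "\<forall>x\<in>A. \<forall>y\<in>A. (x, y) \<in> r \<longleftrightarrow> (f x, f y) \<in> s"
  shows "f ` level A r k = level B s k"
proof -
  have "f ` minset (rest A r k) r = minset (f ` rest A r k) s"
    using minset_image[OF rest_sub assms(2)] .
  then show ?thesis unfolding level_def rest_image[OF assms] .
qed

lemma is_posetD:
  assumes "is_poset A r"
  shows "finite A" "\<And>x. x \<in> A \<Longrightarrow> (x,x) \<notin> r"
    "\<And>x y z. x \<in> A \<Longrightarrow> y \<in> A \<Longrightarrow> z \<in> A \<Longrightarrow> (x, y) \<in> r \<Longrightarrow> (y, z) \<in> r \<Longrightarrow> (x, z) \<in> r"
proof -
  have c: "finite A \<and> (\<forall>x\<in>A. (x, x) \<notin> r) \<and>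
     (\<forall>x\<in>A. \<forall>y\<in>A. \<forall>z\<in>A. (x, y) \<in> r \<longrightarrow> (y, z) \<in> r \<longrightarrow> (x, z) \<in> r)"
    using assms unfolding is_poset_def .
  show "finite A" using c by (rule conjunct1)
  show "\<And>x. x \<in> A \<Longrightarrow> (x,x) \<notin> r" using c by blast
  show "\<And>x y z. x \<in> A \<Longrightarrow> y \<in> A \<Longrightarrow> z \<in> A \<Longrightarrow> (x, y) \<in> r \<Longrightarrow> (y, z) \<in> r \<Longrightarrow> (x, z) \<in> r"
    using c by blast
qed

lemma is_posetI:
  assumes "finite A" "\<And>x. x \<in> A \<Longrightarrow> (x,x) \<notin> r"
    "\<And>x y z. x \<in> A \<Longrightarrow> y \<in> A \<Longrightarrow> z \<in> A \<Longrightarrow> (x, y) \<in> r \<Longrightarrow> (y, z) \<in> r \<Longrightarrow> (x, z) \<in> r"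
  shows "is_poset A r"
  unfolding is_poset_def using assms by blast

lemma iso_poset:
  assumes "bij_betw f A B" "\<forall>x\<in>A. \<forall>y\<in>A. (x, y) \<in> r \<longleftrightarrow> (f x, f y) \<in> s" "is_poset B s"
  shows "is_poset A r"
proof (rule is_posetI)
  have R: "\<And>x y. x \<in> A \<Longrightarrow> y \<in> A \<Longrightarrow> (x, y) \<in> r \<longleftrightarrow> (f x, f y) \<in> s"
    using assms(2) by blast
  have fB: "\<And>x. x \<in> A \<Longrightarrow> f x \<in> B" using assms(1) unfolding bij_betw_def by auto
  note PB = is_posetD[OF assms(3)]
  show "finite A" using bij_betw_finite[OF assms(1)] PB(1) by simp
  show "\<And>x. x \<in> A \<Longrightarrow> (x,x) \<notin> r"
  proof -
    fix x assume x: "x \<in> A"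
    have "(f x, f x) \<notin> s" using PB(2)[OF fB[OF x]] .
    then show "(x,x) \<notin> r" using R[OF x x] by simp
  qed
  show "\<And>x y z. x \<in> A \<Longrightarrow> y \<in> A \<Longrightarrow> z \<in> A \<Longrightarrow> (x, y) \<in> r \<Longrightarrow> (y, z) \<in> r \<Longrightarrow> (x, z) \<in> r"
  proof -
    fix x y z assume xyz: "x \<in> A" "y \<in> A" "z \<in> A" and h: "(x,y) \<in> r" "(y,z) \<in> r"
    have "(f x, f y) \<in> s" using R[OF xyz(1,2)] h(1) by simp
    moreover have "(f y, f z) \<in> s" using R[OF xyz(2,3)] h(2) by simp
    ultimately have "(f x, f z) \<in> s" using PB(3)[OF fB[OF xyz(1)] fB[OF xyz(2)] fB[OF xyz(3)]] by simp
    then show "(x,z) \<in> r" using R[OF xyz(1,3)] by simp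
  qed
qed

lemma NSeg2_facts:
  assumes "NSeg2 A r"
  shows "is_poset A r \<and> (\<forall>l\<ge>2. \<forall>x\<in>level A r 0. \<forall>y\<in>level A r l. (x,y) \<in> r)"
proof -
  obtain B :: "nat set" and s where N: "N2 B s" and I: "iso A r (seg B s 1 (height B s - 1)) s"
    using assms unfolding NSeg2_def by metis
  define h where "h = height B s"
  have N': "section3 B s \<and> nice B s \<and> height B s \<ge> 2 \<and> horizon2 B s" using N unfolding N2_def .
  have sec: "section3 B s" using N' by (elim conjE)
  have PB: "is_poset B s" using conjunct1[OF sec[unfolded section3_def]] .
  have h2: "h \<ge> 2" using N' unfolding h_def by (elim conjE)
  have hor: "horizon2 B s" using N' by (elim conjE)
  obtain f where bij: "bij_betw f A (seg B s 1 (h - 1))"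
    and rel: "\<forall>x\<in>A. \<forall>y\<in>A. (x, y) \<in> r \<longleftrightarrow> (f x, f y) \<in> s"
    using I unfolding iso_def h_def by blast
  have segeq: "seg B s 1 (h - 1) = rest B s 1 - rest B s h" using seg_mid[OF PB] h2 by simp
  define P where "P = rest B s 1"
  define D where "D = rest B s h"
  have up: "\<And>x y. x \<in> D \<Longrightarrow> y \<in> P \<Longrightarrow> (x,y) \<in> s \<Longrightarrow> y \<in> D"
  proof -
    fix x y assume a: "x \<in> D" "y \<in> P" "(x,y) \<in> s"
    have "y \<in> B" using a(2) rest_sub[of B s 1] unfolding P_def by blast
    then show "y \<in> D" using rest_upclosed[of x B s h y] a unfolding D_def by blast
  qed
  have lev: "\<And>k. level (P - D) s k = level B s (Suc k) - D"
  proof -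
    fix k
    have "level (P - D) s k = level P s k - D" using level_diff[of D P s, OF up] by simp
    also have "level P s k = level B s (Suc k)" unfolding level_def P_def rest_rest by simp
    finally show "level (P - D) s k = level B s (Suc k) - D" .
  qed
  have PS: "is_poset (seg B s 1 (h - 1)) s"
    using is_poset_sub[OF PB] segeq rest_sub by (metis Diff_subset subset_trans)
  have pos: "is_poset A r" using iso_poset[OF bij rel PS] .
  have bij': "bij_betw f A (P - D)" using bij segeq unfolding P_def D_def by simp
  have "\<forall>l\<ge>2. \<forall>x\<in>level A r 0. \<forall>y\<in>level A r l. (x,y) \<in> r"
  proof (intro allI impI ballI)
    fix l x y assume l: "2 \<le> l" and x: "x \<in> level A r 0" and y: "y \<in> level A r l"
    have "f x \<in> level (P - D) s 0" using level_image[OF bij' rel, of 0] x by blast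
    then have fx: "f x \<in> level B s 1" using lev by simp
    have "f y \<in> level (P - D) s l" using level_image[OF bij' rel, of l] y by blast
    then have fy: "f y \<in> level B s (Suc l)" using lev by simp
    have "1 + 2 \<le> Suc l" using l by simp
    then have "(f x, f y) \<in> s" using hor fx fy unfolding horizon2_def by blast
    moreover have "x \<in> A" "y \<in> A" using x y level_sub_rest[of A r] rest_sub[of A r] by blast+
    ultimately show "(x,y) \<in> r" using rel by blast
  qed
  then show ?thesis using pos by blast
qed



lemma seg01: "seg A r 0 1 = level A r 0 \<union> level A r 1"
proof -
  have "{0..1::nat} = {0,1}" by auto
  then show ?thesis unfolding seg_def by simp
qed

lemma rest2: "rest A r 2 = A - (level A r 0 \<union> level A r 1)"
proof -
  have "rest A r 2 = rest A r 1 - minset (rest A r 1) r" by (simp add: numeral_2_eq_2)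
  moreover have "rest A r 1 = A - minset A r" by simp
  ultimately show ?thesis unfolding level_def by auto
qed

lemma level0: "level A r 0 = minset A r" unfolding level_def by simp

lemma below_level1:
  assumes "x \<in> level A r 1" "y \<in> A" "(y,x) \<in> r"
  shows "y \<in> level A r 0"
proof (rule ccontr)
  assume "y \<notin> level A r 0"
  then have "y \<in> rest A r 1" using assms(2) by (simp add: level_def)
  then show False using assms(1,3) unfolding level_def minset_def by auto
qed

lemma level1_has_below:
  assumes "x \<in> level A r 1"
  shows "\<exists>y\<in>A. (y,x) \<in> r"
proof -
  have "x \<in> rest A r 1" using assms level_sub_rest[of A r 1] by blast
  then have "x \<in> A" "x \<notin> minset A r" by auto
  then show ?thesis unfolding minset_def by blast
qed

lemma crown_elems:
  assumes "iso X r crown4_carrier crown4_rel"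
  shows "\<exists>p q s t. X = {p,q,s,t} \<and> p \<noteq> q \<and> p \<noteq> s \<and> p \<noteq> t \<and> q \<noteq> s \<and> q \<noteq> t \<and> s \<noteq> t \<and>
     (p,s) \<in> r \<and> (p,t) \<in> r \<and> (q,s) \<in> r \<and> (q,t) \<in> r \<and>
     (\<forall>x\<in>X. (x,p) \<notin> r \<and> (x,q) \<notin> r) \<and> (\<forall>x\<in>{s,t}. \<forall>y\<in>{s,t}. (x,y) \<notin> r)"
proof -
  obtain g where bij: "bij_betw g X {0..3::nat}"
    and rel: "\<forall>x\<in>X. \<forall>y\<in>X. (x, y) \<in> r \<longleftrightarrow> (g x, g y) \<in> crown4_rel"
    using assms unfolding iso_def crown4_carrier_def by blast
  define h where "h = inv_into X g"
  have hX: "\<And>n. n \<in> {0..3} \<Longrightarrow> h n \<in> X" unfolding h_def using bij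
    by (metis bij_betw_imp_surj_on inv_into_into)
  have gh: "\<And>n. n \<in> {0..3} \<Longrightarrow> g (h n) = n" unfolding h_def using bij
    by (metis bij_betw_inv_into_right)
  have hg: "\<And>x. x \<in> X \<Longrightarrow> h (g x) = x" unfolding h_def using bij
    by (metis bij_betw_inv_into_left)
  have gX: "\<And>x. x \<in> X \<Longrightarrow> g x \<in> {0..3}" using bij bij_betwE by blast
  define p where "p = h 0"
  define q where "q = h 1"
  define s where "s = h 2"
  define t where "t = h 3"
  have mem: "p \<in> X" "q \<in> X" "s \<in> X" "t \<in> X" unfolding p_def q_def s_def t_def using hX by auto
  have gv: "g p = 0" "g q = 1" "g s = 2" "g t = 3" unfolding p_def q_def s_def t_def using gh by auto
  have R: "\<And>x y. x \<in> X \<Longrightarrow> y \<in> X \<Longrightarrow> (x, y) \<in> r \<longleftrightarrow> (g x, g y) \<in> crown4_rel"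
    using rel by blast
  have Xeq: "X = {p,q,s,t}"
  proof
    show "X \<subseteq> {p,q,s,t}"
    proof
      fix x assume x: "x \<in> X"
      have "g x \<in> {0..3}" using gX[OF x] .
      then have "g x = 0 \<or> g x = 1 \<or> g x = 2 \<or> g x = 3" by auto
      then show "x \<in> {p,q,s,t}" using hg[OF x] unfolding p_def q_def s_def t_def by auto
    qed
    show "{p,q,s,t} \<subseteq> X" using mem by auto
  qed
  have d: "p \<noteq> q \<and> p \<noteq> s \<and> p \<noteq> t \<and> q \<noteq> s \<and> q \<noteq> t \<and> s \<noteq> t" using gv by auto
  have r1: "(p,s) \<in> r \<and> (p,t) \<in> r \<and> (q,s) \<in> r \<and> (q,t) \<in> r"
    using R mem gv by (simp add: crown4_rel_def)
  have r2: "\<forall>x\<in>X. (x,p) \<notin> r \<and> (x,q) \<notin> r"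
  proof
    fix x assume x: "x \<in> X"
    show "(x,p) \<notin> r \<and> (x,q) \<notin> r" using R[OF x mem(1)] R[OF x mem(2)] gv by (simp add: crown4_rel_def)
  qed
  have r3: "\<forall>x\<in>{s,t}. \<forall>y\<in>{s,t}. (x,y) \<notin> r"
    using R mem gv by (auto simp: crown4_rel_def)
  show ?thesis using Xeq d r1 r2 r3 by blast
qed



lemma horU:
  assumes hor: "\<forall>l\<ge>2. \<forall>x\<in>level A r 0. \<forall>y\<in>level A r l. (x,y) \<in> r"
    and x: "x \<in> level A r 0" and y: "y \<in> seg A r 2 (height A r)"
  shows "(x,y) \<in> r"
proof -
  obtain l where "l \<in> {2..height A r}" "y \<in> level A r l" using y unfolding seg_def by blast
  then show ?thesis using hor x by auto
qed

lemma C3_rel_below: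
  assumes "iso (seg A r 0 1) r C3_carrier C3_rel"
  shows "\<exists>\<phi>. inj_on \<phi> (seg A r 0 1) \<and> (\<forall>x\<in>seg A r 0 1. \<forall>y\<in>seg A r 0 1. (x,y) \<in> r \<longleftrightarrow> (\<phi> x, \<phi> y) \<in> C3_rel)
     \<and> (\<exists>a\<in>level A r 0. \<phi> a = 0) \<and> (\<exists>b\<in>level A r 0. \<phi> b = 2)"
proof -
  obtain g where bij: "bij_betw g (seg A r 0 1) {0..5::nat}"
    and rel: "\<forall>x\<in>seg A r 0 1. \<forall>y\<in>seg A r 0 1. (x, y) \<in> r \<longleftrightarrow> (g x, g y) \<in> C3_rel"
    using assms unfolding iso_def C3_carrier_def by blast
  have R: "\<And>x y. x \<in> seg A r 0 1 \<Longrightarrow> y \<in> seg A r 0 1 \<Longrightarrow> (x, y) \<in> r \<longleftrightarrow> (g x, g y) \<in> C3_rel"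
    using rel by blast
  have inj: "inj_on g (seg A r 0 1)" using bij by (simp add: bij_betw_def)
  have ex: "\<And>n. n \<in> {0..5} \<Longrightarrow> \<exists>x\<in>seg A r 0 1. g x = n"
  proof -
    fix n :: nat assume "n \<in> {0..5}"
    then have "n \<in> g ` seg A r 0 1" using bij unfolding bij_betw_def by simp
    then show "\<exists>x\<in>seg A r 0 1. g x = n" by (metis imageE)
  qed
  have lowmin: "\<And>n. n \<in> {0..5} \<Longrightarrow> (\<forall>m. (m,n) \<notin> C3_rel) \<Longrightarrow> \<exists>a\<in>level A r 0. g a = n"
  proof -
    fix n :: nat assume n: "n \<in> {0..5}" and nm: "\<forall>m. (m,n) \<notin> C3_rel"
    obtain x where x: "x \<in> seg A r 0 1" "g x = n" using ex[OF n] by blast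
    have "x \<in> level A r 0"
    proof (rule ccontr)
      assume "x \<notin> level A r 0"
      then have x1: "x \<in> level A r 1" using x(1) seg01[of A r] by blast
      obtain y where y: "y \<in> A" "(y,x) \<in> r" using level1_has_below[OF x1] by blast
      have "y \<in> level A r 0" using below_level1[OF x1 y] .
      then have "y \<in> seg A r 0 1" using seg01[of A r] by blast
      then have "(g y, g x) \<in> C3_rel" using R[of y x] x(1) y(2) by simp
      then show False using nm x(2) by simp
    qed
    then show "\<exists>a\<in>level A r 0. g a = n" using x(2) by blast
  qed
  have "\<exists>a\<in>level A r 0. g a = 0" by (rule lowmin) (auto simp: C3_rel_def)
  moreover have "\<exists>a\<in>level A r 0. g a = 2" by (rule lowmin) (auto simp: C3_rel_def)
  ultimately show ?thesis using inj rel by blast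
qed



lemma is_retractE:
  assumes "is_retract A r R"
  obtains f where "\<And>x. x \<in> A \<Longrightarrow> f x \<in> A" "f ` A = R" "\<And>x. x \<in> A \<Longrightarrow> f (f x) = f x"
    "\<And>x y. x \<in> A \<Longrightarrow> y \<in> A \<Longrightarrow> (x, y) \<in> r \<Longrightarrow> f x = f y \<or> (f x, f y) \<in> r"
  using assms unfolding is_retract_def by blast

lemma is_retractI:
  assumes "\<And>x. x \<in> A \<Longrightarrow> f x \<in> A" "f ` A = R" "\<And>x. x \<in> A \<Longrightarrow> f (f x) = f x"
    "\<And>x y. x \<in> A \<Longrightarrow> y \<in> A \<Longrightarrow> (x, y) \<in> r \<Longrightarrow> f x = f y \<or> (f x, f y) \<in> r"
  shows "is_retract A r R"
  unfolding is_retract_def using assms by blast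

lemma fwd:
  assumes PA: "is_poset A r"
    and hor: "\<forall>l\<ge>2. \<forall>x\<in>level A r 0. \<forall>y\<in>level A r l. (x,y) \<in> r"
    and C3: "iso (seg A r 0 1) r C3_carrier C3_rel"
    and ret: "is_retract A r R" and cr: "iso (seg R r 0 1) r crown4_carrier crown4_rel"
  shows "\<exists>T. is_retract (seg A r 2 (height A r)) r T \<and> card (level T r 0) = 2 \<and>
            (\<forall>x\<in>level T r 0. \<forall>y\<in>level T r 0. (x, y) \<notin> r)"
proof -
  define U where "U = seg A r 2 (height A r)"
  have Ueq: "U = rest A r 2" unfolding U_def using seg_eq_rest[OF PA] .
  note PD = is_posetD[OF PA]
  obtain f where fA: "\<And>x. x \<in> A \<Longrightarrow> f x \<in> A" and img: "f ` A = R"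
    and idem: "\<And>x. x \<in> A \<Longrightarrow> f (f x) = f x"
    and mono: "\<And>x y. x \<in> A \<Longrightarrow> y \<in> A \<Longrightarrow> (x, y) \<in> r \<Longrightarrow> f x = f y \<or> (f x, f y) \<in> r"
    using is_retractE[OF ret] by blast
  have RA: "R \<subseteq> A" using img fA by blast
  have fixR: "\<And>y. y \<in> R \<Longrightarrow> f y = y" using img idem by blast
  obtain p q s t where Seq: "seg R r 0 1 = {p,q,s,t}" and d: "p \<noteq> q" "p \<noteq> s" "p \<noteq> t" "q \<noteq> s" "q \<noteq> t" "s \<noteq> t"
    and r1: "(p,s) \<in> r" "(p,t) \<in> r" "(q,s) \<in> r" "(q,t) \<in> r"
    and r2: "\<forall>x\<in>seg R r 0 1. (x,p) \<notin> r \<and> (x,q) \<notin> r"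
    and r3: "\<forall>x\<in>{s,t}. \<forall>y\<in>{s,t}. (x,y) \<notin> r"
    using crown_elems[OF cr] by blast
  have SR: "seg R r 0 1 = level R r 0 \<union> level R r 1" using seg01 .
  have SRsub: "seg R r 0 1 \<subseteq> R" unfolding SR using level_sub_rest[of R r 0] level_sub_rest[of R r 1] rest_sub[of R r] by blast
  have inR: "p \<in> R" "q \<in> R" "s \<in> R" "t \<in> R" using SRsub Seq by auto
  have l1: "level R r 1 = minset (R - minset R r) r" unfolding level_def by simp
  have l0: "level R r 0 = minset R r" unfolding level_def by simp
  have s_nmin: "s \<notin> minset R r" "t \<notin> minset R r" using inR r1 unfolding minset_def by auto
  have pq_min: "p \<in> minset R r" "q \<in> minset R r"
  proof -
    have gen: "\<And>m. m \<in> {p,q} \<Longrightarrow> m \<in> minset R r"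
    proof (rule ccontr)
      fix m assume m: "m \<in> {p,q}" and nm: "m \<notin> minset R r"
      have mS: "m \<in> seg R r 0 1" using m Seq by auto
      then have "m \<in> level R r 1" using nm SR l0 by blast
      then have m1: "m \<in> minset (R - minset R r) r" using l1 by simp
      have mR: "m \<in> R" using m inR by auto
      then obtain y where y: "y \<in> R" "(y,m) \<in> r" using nm unfolding minset_def by blast
      show False
      proof (cases "y \<in> minset R r")
        case True
        then have "y \<in> seg R r 0 1" using SR l0 by blast
        then have "(y,p) \<notin> r" "(y,q) \<notin> r" using r2 by blast+
        then show False using m y(2) by blast
      next
        case False
        then have "y \<in> R - minset R r" using y(1) by simp
        then show False using m1 y(2) unfolding minset_def by blast
      qed
    qed
    show "p \<in> minset R r" by (rule gen) simp
    show "q \<in> minset R r" by (rule gen) simp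
  qed
  have minR: "minset R r = {p,q}"
  proof
    show "minset R r \<subseteq> {p,q}"
    proof
      fix x assume x: "x \<in> minset R r"
      then have "x \<in> seg R r 0 1" using SR l0 by blast
      then show "x \<in> {p,q}" using Seq x s_nmin by auto
    qed
    show "{p,q} \<subseteq> minset R r" using pq_min by blast
  qed
  have lev1R: "level R r 1 = {s,t}"
  proof
    show "level R r 1 \<subseteq> {s,t}"
    proof
      fix x assume x: "x \<in> level R r 1"
      then have "x \<in> seg R r 0 1" using SR by blast
      moreover have "x \<notin> minset R r" using x l1 minset_sub[of "R - minset R r" r] by blast
      ultimately show "x \<in> {s,t}" using Seq minR by auto
    qed
    have "s \<in> seg R r 0 1" "t \<in> seg R r 0 1" using Seq by auto
    then show "{s,t} \<subseteq> level R r 1" using SR l0 s_nmin by blast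
  qed
  have L0A: "level A r 0 = minset A r" unfolding level_def by simp
  have notpq: "\<And>x. x \<in> U \<Longrightarrow> f x \<noteq> p \<and> f x \<noteq> q"
  proof -
    have gen: "\<And>m m' x. x \<in> U \<Longrightarrow> {m,m'} = {p,q} \<Longrightarrow> f x \<noteq> m"
    proof
      fix m m' x assume x: "x \<in> U" and mm: "{m,m'} = {p,q}" and fx: "f x = m"
      have mm': "m \<noteq> m'" "(m,m') \<notin> r" "m \<in> minset R r" "m' \<in> R"
        using mm d(1) r2 Seq inR minR by (auto simp: doubleton_eq_iff)
      have xA: "x \<in> A" using x Ueq rest_sub[of A r 2] by blast
      have fa: "\<And>a. a \<in> level A r 0 \<Longrightarrow> f a = m"
      proof -
        fix a assume a: "a \<in> level A r 0"
        have aA: "a \<in> A" using a L0A minset_sub[of A r] by blast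
        have "(a,x) \<in> r" using horU[OF hor a] x unfolding U_def by blast
        then have "f a = m \<or> (f a, m) \<in> r" using mono[OF aA xA] fx by simp
        moreover have "f a \<in> R" using img aA by blast
        ultimately show "f a = m" using mm'(3) unfolding minset_def by blast
      qed
      have m'A: "m' \<in> A" using mm'(4) RA by blast
      obtain a where a: "a \<in> minset A r" "a = m' \<or> (a,m') \<in> r" using ex_min_below[OF PA m'A] by blast
      have aA: "a \<in> A" using a(1) minset_sub[of A r] by blast
      have fam: "f a = m" using fa a(1) L0A by blast
      have fm': "f m' = m'" using fixR mm'(4) by blast
      show False
      proof (cases "a = m'")
        case True then show False using fam fm' mm'(1) by simp
      next
        case False
        then have "(a,m') \<in> r" using a(2) by simp
        then have "f a = f m' \<or> (f a, f m') \<in> r" using mono[OF aA m'A] by simp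
        then show False using fam fm' mm'(1,2) by simp
      qed
    qed
    fix x assume x: "x \<in> U"
    show "f x \<noteq> p \<and> f x \<noteq> q" using gen[OF x, of p q] gen[OF x, of q p] by auto
  qed
  obtain \<phi> where inj\<phi>: "inj_on \<phi> (seg A r 0 1)"
    and rel\<phi>: "\<forall>x\<in>seg A r 0 1. \<forall>y\<in>seg A r 0 1. (x,y) \<in> r \<longleftrightarrow> (\<phi> x, \<phi> y) \<in> C3_rel"
    using C3_rel_below[OF C3] by blast
  have stU: "\<And>z. z \<in> {s,t} \<Longrightarrow> z \<in> U"
  proof -
    fix z assume z: "z \<in> {s,t}"
    have zA: "z \<in> A" using z inR RA by auto
    have pz: "(p,z) \<in> r" "(q,z) \<in> r" using z r1 by auto
    have pA: "p \<in> A" "q \<in> A" using inR RA by auto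
    have n0: "z \<notin> level A r 0" using pz pA L0A unfolding minset_def by blast
    have n1: "z \<notin> level A r 1"
    proof
      assume z1: "z \<in> level A r 1"
      have "p \<in> level A r 0" "q \<in> level A r 0" using below_level1[OF z1] pA pz by blast+
      then have ps: "p \<in> seg A r 0 1" "q \<in> seg A r 0 1" using seg01[of A r] by blast+
      have zs: "z \<in> seg A r 0 1" using z1 seg01[of A r] by blast
      have "(\<phi> p, \<phi> z) \<in> C3_rel" "(\<phi> q, \<phi> z) \<in> C3_rel" using rel\<phi> ps zs pz by blast+
      then have "\<phi> p = \<phi> q" by (auto simp: C3_rel_def)
      then have "p = q" using inj\<phi> ps unfolding inj_on_def by blast
      then show False using d(1) by simp
    qed
    show "z \<in> U" unfolding Ueq rest2 using zA n0 n1 by blast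
  qed
  have fxU: "\<And>x. x \<in> U \<Longrightarrow> f x \<in> U \<and> (\<exists>n\<in>{s,t}. n = f x \<or> (n, f x) \<in> r)"
  proof -
    fix x assume x: "x \<in> U"
    have xA: "x \<in> A" using x Ueq rest_sub[of A r 2] by blast
    have fxR: "f x \<in> R" using img xA by blast
    have "f x \<in> R - minset R r" using fxR notpq[OF x] minR by auto
    moreover have "is_poset (R - minset R r) r" using is_poset_sub[OF PA, of "R - minset R r"] RA by blast
    ultimately obtain n where n: "n \<in> minset (R - minset R r) r" "n = f x \<or> (n, f x) \<in> r"
      using ex_min_below[of "R - minset R r" r "f x"] by blast
    have nst: "n \<in> {s,t}" using n(1) lev1R l1 by simp
    have nU: "n \<in> U" using stU[OF nst] .
    have "f x \<in> U"
    proof (cases "n = f x")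
      case True then show ?thesis using nU by simp
    next
      case False
      then have "(n, f x) \<in> r" using n(2) by simp
      then show ?thesis using rest_upclosed[of n A r 2 "f x"] nU fA[OF xA] Ueq by blast
    qed
    then show "f x \<in> U \<and> (\<exists>n\<in>{s,t}. n = f x \<or> (n, f x) \<in> r)" using nst n(2) by blast
  qed
  define T where "T = f ` U"
  have UA: "U \<subseteq> A" using Ueq rest_sub[of A r 2] by blast
  have retT: "is_retract U r T"
  proof (rule is_retractI[of U f])
    show "\<And>x. x \<in> U \<Longrightarrow> f x \<in> U" using fxU by blast
    show "f ` U = T" unfolding T_def ..
    show "\<And>x. x \<in> U \<Longrightarrow> f (f x) = f x" using idem UA by blast
    show "\<And>x y. x \<in> U \<Longrightarrow> y \<in> U \<Longrightarrow> (x, y) \<in> r \<Longrightarrow> f x = f y \<or> (f x, f y) \<in> r"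
      using mono UA by blast
  qed
  have sT: "s \<in> T" "t \<in> T"
  proof -
    have "s \<in> U" "t \<in> U" using stU by auto
    moreover have "f s = s" "f t = t" using fixR inR by auto
    ultimately show "s \<in> T" "t \<in> T" unfolding T_def by (metis imageI)+
  qed
  have TA: "T \<subseteq> A" unfolding T_def using fxU UA by blast
  have Tbelow: "\<And>y. y \<in> T \<Longrightarrow> \<exists>n\<in>{s,t}. n = y \<or> (n, y) \<in> r"
  proof -
    fix y assume "y \<in> T"
    then obtain x where x: "x \<in> U" "y = f x" unfolding T_def by blast
    show "\<exists>n\<in>{s,t}. n = y \<or> (n, y) \<in> r" using fxU[OF x(1)] x(2) by simp
  qed
  have irr: "\<And>x. x \<in> A \<Longrightarrow> (x,x) \<notin> r" using PD(2) .
  have trn: "\<And>x y z. x \<in> A \<Longrightarrow> y \<in> A \<Longrightarrow> z \<in> A \<Longrightarrow> (x, y) \<in> r \<Longrightarrow> (y, z) \<in> r \<Longrightarrow> (x, z) \<in> r"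
    using PD(3) .
  have stA: "s \<in> A" "t \<in> A" using inR RA by auto
  have minT: "minset T r = {s,t}"
  proof
    show "minset T r \<subseteq> {s,t}"
    proof
      fix y assume y: "y \<in> minset T r"
      then have yT: "y \<in> T" using minset_sub[of T r] by blast
      obtain n where n: "n \<in> {s,t}" "n = y \<or> (n, y) \<in> r" using Tbelow[OF yT] by blast
      have "n \<in> T" using n(1) sT by auto
      then have "(n,y) \<notin> r" using y unfolding minset_def by blast
      then show "y \<in> {s,t}" using n by auto
    qed
    show "{s,t} \<subseteq> minset T r"
    proof
      fix z assume z: "z \<in> {s,t}"
      have zT: "z \<in> T" using z sT by auto
      have zA: "z \<in> A" using z stA by auto
      have "\<forall>y\<in>T. (y,z) \<notin> r"
      proof (intro ballI notI)
        fix y assume yT: "y \<in> T" and yz: "(y,z) \<in> r"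
        have yA: "y \<in> A" using yT TA by blast
        obtain n where n: "n \<in> {s,t}" "n = y \<or> (n, y) \<in> r" using Tbelow[OF yT] by blast
        have nA: "n \<in> A" using n(1) stA by auto
        have "(n,z) \<in> r" using n(2) yz trn[OF nA yA zA] by auto
        then show False using r3 n(1) z by blast
      qed
      then show "z \<in> minset T r" using zT unfolding minset_def by blast
    qed
  qed
  have "level T r 0 = {s,t}" using minT unfolding level_def by simp
  moreover have "card {s,t} = 2" using d(6) by simp
  moreover have "\<forall>x\<in>{s,t}. \<forall>y\<in>{s,t}. (x, y) \<notin> r" using r3 .
  ultimately show ?thesis using retT unfolding U_def by metis
qed



lemma bwd:
  assumes PA: "is_poset A r"
    and hor: "\<forall>l\<ge>2. \<forall>x\<in>level A r 0. \<forall>y\<in>level A r l. (x,y) \<in> r"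
    and C3: "iso (seg A r 0 1) r C3_carrier C3_rel"
    and ret: "is_retract (seg A r 2 (height A r)) r T" and c2: "card (level T r 0) = 2"
    and ac: "\<forall>x\<in>level T r 0. \<forall>y\<in>level T r 0. (x, y) \<notin> r"
  shows "\<exists>R. is_retract A r R \<and> iso (seg R r 0 1) r crown4_carrier crown4_rel"
proof -
  define U where "U = seg A r 2 (height A r)"
  define S where "S = seg A r 0 1"
  have Ueq: "U = rest A r 2" unfolding U_def using seg_eq_rest[OF PA] .
  have Seq: "S = level A r 0 \<union> level A r 1" unfolding S_def using seg01 .
  have US: "U = A - S" unfolding Ueq Seq rest2 ..
  have SA: "S \<subseteq> A" unfolding Seq using level_sub_rest[of A r 0] level_sub_rest[of A r 1] rest_sub[of A r] by blast
  note PD = is_posetD[OF PA]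
  have L0A: "level A r 0 = minset A r" unfolding level_def by simp
  obtain g where gU: "\<And>x. x \<in> U \<Longrightarrow> g x \<in> U" and img: "g ` U = T"
    and idem: "\<And>x. x \<in> U \<Longrightarrow> g (g x) = g x"
    and mono: "\<And>x y. x \<in> U \<Longrightarrow> y \<in> U \<Longrightarrow> (x, y) \<in> r \<Longrightarrow> g x = g y \<or> (g x, g y) \<in> r"
    using is_retractE[OF ret] unfolding U_def by blast
  have TU: "T \<subseteq> U" using img gU by blast
  obtain u v where uv: "level T r 0 = {u,v}" "u \<noteq> v" using c2 card_2_iff by metis
  have uvac: "(u,v) \<notin> r" "(v,u) \<notin> r" using ac uv by auto
  have uvT: "u \<in> T" "v \<in> T" using uv(1) level_sub_rest[of T r 0] by auto
  have uvU: "u \<in> U" "v \<in> U" using uvT TU by auto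
  obtain \<phi> where inj\<phi>: "inj_on \<phi> S"
    and rel\<phi>: "\<forall>x\<in>S. \<forall>y\<in>S. (x,y) \<in> r \<longleftrightarrow> (\<phi> x, \<phi> y) \<in> C3_rel"
    and ea: "\<exists>a\<in>level A r 0. \<phi> a = 0" and eb: "\<exists>b\<in>level A r 0. \<phi> b = 2"
    using C3_rel_below[OF C3] unfolding S_def by blast
  obtain \<alpha> where \<alpha>: "\<alpha> \<in> level A r 0" "\<phi> \<alpha> = 0" using ea by blast
  obtain \<beta> where \<beta>: "\<beta> \<in> level A r 0" "\<phi> \<beta> = 2" using eb by blast
  have abS: "\<alpha> \<in> S" "\<beta> \<in> S" using \<alpha> \<beta> Seq by auto
  have abA: "\<alpha> \<in> A" "\<beta> \<in> A" using abS SA by auto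
  have ab: "\<alpha> \<noteq> \<beta>" using \<alpha> \<beta> by auto
  have abmin: "\<alpha> \<in> minset A r" "\<beta> \<in> minset A r" using \<alpha> \<beta> L0A by auto
  have R\<phi>: "\<And>x y. x \<in> S \<Longrightarrow> y \<in> S \<Longrightarrow> (x,y) \<in> r \<Longrightarrow> (\<phi> x, \<phi> y) \<in> C3_rel"
    using rel\<phi> by blast
  have hU: "\<And>a y. a \<in> level A r 0 \<Longrightarrow> y \<in> U \<Longrightarrow> (a,y) \<in> r"
    using horU[OF hor] unfolding U_def by blast
  define F where "F x = (if x \<in> S then (if \<phi> x \<in> {2,3} then \<beta> else \<alpha>) else g x)" for x
  define R where "R = {\<alpha>, \<beta>} \<union> T"
  have FS: "\<And>x. x \<in> S \<Longrightarrow> F x \<in> {\<alpha>,\<beta>}" unfolding F_def by auto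
  have FU: "\<And>x. x \<in> U \<Longrightarrow> F x = g x" unfolding F_def US by auto
  have Fa: "F \<alpha> = \<alpha>" "F \<beta> = \<beta>" unfolding F_def using abS \<alpha>(2) \<beta>(2) by auto
  have UA: "U \<subseteq> A" unfolding US by blast
  have AUS: "\<And>x. x \<in> A \<Longrightarrow> x \<in> S \<or> x \<in> U" unfolding US by blast
  have retR: "is_retract A r R"
  proof (rule is_retractI[of A F])
    show "\<And>x. x \<in> A \<Longrightarrow> F x \<in> A"
    proof -
      fix x assume x: "x \<in> A"
      show "F x \<in> A"
      proof (cases "x \<in> S")
        case True then show ?thesis using FS abA by blast
      next
        case False then have "x \<in> U" using x US by blast
        then show ?thesis using FU gU UA by auto
      qed
    qed
    show "F ` A = R"
    proof
      show "F ` A \<subseteq> R"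
      proof
        fix y assume "y \<in> F ` A"
        then obtain x where x: "x \<in> A" "y = F x" by blast
        show "y \<in> R"
        proof (cases "x \<in> S")
          case True then show ?thesis using FS x unfolding R_def by blast
        next
          case False then have "x \<in> U" using x US by blast
          then show ?thesis using FU img x unfolding R_def by auto
        qed
      qed
      show "R \<subseteq> F ` A"
      proof
        fix y assume y: "y \<in> R"
        show "y \<in> F ` A"
        proof (cases "y \<in> T")
          case True
          then obtain x where x: "x \<in> U" "y = g x" using img by blast
          then have "y = F x" using FU by simp
          then show ?thesis using x UA by blast
        next
          case False
          then have "y = \<alpha> \<or> y = \<beta>" using y unfolding R_def by blast
          then show ?thesis using Fa abA by (metis imageI)
        qed
      qed
    qed
    show "\<And>x. x \<in> A \<Longrightarrow> F (F x) = F x"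
    proof -
      fix x assume x: "x \<in> A"
      show "F (F x) = F x"
      proof (cases "x \<in> S")
        case True then show ?thesis using FS Fa by auto
      next
        case False then have xU: "x \<in> U" using x US by blast
        then have "F x = g x" using FU by simp
        moreover have "g x \<in> U" using gU xU by simp
        ultimately show ?thesis using FU idem xU by simp
      qed
    qed
    show "\<And>x y. x \<in> A \<Longrightarrow> y \<in> A \<Longrightarrow> (x, y) \<in> r \<Longrightarrow> F x = F y \<or> (F x, F y) \<in> r"
    proof -
      fix x y assume x: "x \<in> A" and y: "y \<in> A" and xy: "(x,y) \<in> r"
      show "F x = F y \<or> (F x, F y) \<in> r"
      proof (cases "x \<in> S")
        case xS: True
        show ?thesis
        proof (cases "y \<in> S")
          case yS: True
          have "(\<phi> x, \<phi> y) \<in> C3_rel" using R\<phi>[OF xS yS xy] .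
          then have "(\<phi> x \<in> {2,3}) = (\<phi> y \<in> {2,3})" by (auto simp: C3_rel_def)
          then show ?thesis unfolding F_def using xS yS by simp
        next
          case False then have yU: "y \<in> U" using y US by blast
          have "F x \<in> level A r 0" using FS[OF xS] \<alpha>(1) \<beta>(1) by blast
          moreover have "F y \<in> U" using FU gU yU by simp
          ultimately show ?thesis using hU by blast
        qed
      next
        case xnS: False then have xU: "x \<in> U" using x US by blast
        have "y \<in> U" using rest_upclosed[of x A r 2 y] xU y xy Ueq by blast
        then show ?thesis using mono[OF xU _ xy] FU xU by simp
      qed
    qed
  qed
  have RA: "R \<subseteq> A" unfolding R_def using abA TU UA by blast
  have abT: "\<alpha> \<notin> T" "\<beta> \<notin> T" using abS TU US by auto
  have minR: "minset R r = {\<alpha>,\<beta>}"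
  proof
    show "minset R r \<subseteq> {\<alpha>,\<beta>}"
    proof
      fix y assume y: "y \<in> minset R r"
      show "y \<in> {\<alpha>,\<beta>}"
      proof (rule ccontr)
        assume "y \<notin> {\<alpha>,\<beta>}"
        then have "y \<in> T" using y minset_sub[of R r] unfolding R_def by blast
        then have "(\<alpha>, y) \<in> r" using hU \<alpha>(1) TU by blast
        moreover have "\<alpha> \<in> R" unfolding R_def by simp
        ultimately show False using y unfolding minset_def by blast
      qed
    qed
    show "{\<alpha>,\<beta>} \<subseteq> minset R r" using abmin RA unfolding minset_def R_def by blast
  qed
  have restR: "R - minset R r = T"
  proof -
    have "R - minset R r = R - {\<alpha>,\<beta>}" using minR by simp
    also have "\<dots> = T" unfolding R_def using abT by blast
    finally show ?thesis .
  qed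
  have l0R: "level R r 0 = {\<alpha>,\<beta>}" using minR unfolding level_def by simp
  have l1R: "level R r 1 = {u,v}"
  proof -
    have "level R r 1 = minset (R - minset R r) r" unfolding level_def by simp
    also have "\<dots> = minset T r" using restR by simp
    also have "\<dots> = level T r 0" unfolding level_def by simp
    finally show ?thesis using uv(1) by simp
  qed
  have segR: "seg R r 0 1 = {\<alpha>,\<beta>,u,v}" using seg01[of R r] l0R l1R by auto
  have dist: "\<alpha> \<noteq> u" "\<alpha> \<noteq> v" "\<beta> \<noteq> u" "\<beta> \<noteq> v" using abT uvT by auto
  define \<psi> where "\<psi> x = (if x = \<alpha> then 0 else if x = \<beta> then 1 else if x = u then 2 else (3::nat))" for x
  have \<psi>v: "\<psi> \<alpha> = 0" "\<psi> \<beta> = 1" "\<psi> u = 2" "\<psi> v = 3" unfolding \<psi>_def using ab dist uv(2) by auto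
  have bij: "bij_betw \<psi> {\<alpha>,\<beta>,u,v} {0..3}"
  proof (rule bij_betw_imageI)
    show "inj_on \<psi> {\<alpha>,\<beta>,u,v}" unfolding inj_on_def using \<psi>v by auto
    have "{0..3::nat} = {0,1,2,3}" by auto
    then show "\<psi> ` {\<alpha>,\<beta>,u,v} = {0..3}" using \<psi>v by auto
  qed
  have uvA: "u \<in> A" "v \<in> A" using uvU UA by auto
  have pos: "(\<alpha>,u) \<in> r" "(\<alpha>,v) \<in> r" "(\<beta>,u) \<in> r" "(\<beta>,v) \<in> r"
    using hU \<alpha>(1) \<beta>(1) uvU by auto
  have neg1: "\<And>z. z \<in> A \<Longrightarrow> (z,\<alpha>) \<notin> r \<and> (z,\<beta>) \<notin> r" using abmin unfolding minset_def by blast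
  have neg2: "(u,u) \<notin> r" "(v,v) \<notin> r" using PD(2) uvA by auto
  have relok: "\<forall>x\<in>{\<alpha>,\<beta>,u,v}. \<forall>y\<in>{\<alpha>,\<beta>,u,v}. (x, y) \<in> r \<longleftrightarrow> (\<psi> x, \<psi> y) \<in> crown4_rel"
    using \<psi>v pos neg1[OF abA(1)] neg1[OF abA(2)] neg1[OF uvA(1)] neg1[OF uvA(2)] neg2 uvac
    by (auto simp: crown4_rel_def)
  have "iso (seg R r 0 1) r crown4_carrier crown4_rel"
    unfolding iso_def segR crown4_carrier_def using bij relok by blast
  then show ?thesis using retR by blast
qed


theorem corollary4p6:
  fixes A :: "'a set" and r :: "'a rel"
  assumes "NSeg2 A r"
    and "height A r \<ge> 2"
    and "iso (seg A r 0 1) r C3_carrier C3_rel"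
  shows "(\<exists>R. is_retract A r R \<and> iso (seg R r 0 1) r crown4_carrier crown4_rel)
     \<longleftrightarrow> (\<exists>T. is_retract (seg A r 2 (height A r)) r T \<and>
            card (level T r 0) = 2 \<and>
            (\<forall>x\<in>level T r 0. \<forall>y\<in>level T r 0. (x, y) \<notin> r))"
proof -
  have F: "is_poset A r \<and> (\<forall>l\<ge>2. \<forall>x\<in>level A r 0. \<forall>y\<in>level A r l. (x,y) \<in> r)"
    using NSeg2_facts[OF assms(1)] .
  have PA: "is_poset A r" using F by (rule conjunct1)
  have hor: "\<forall>l\<ge>2. \<forall>x\<in>level A r 0. \<forall>y\<in>level A r l. (x,y) \<in> r" using F by (rule conjunct2)
  show ?thesis
  proof
    assume "\<exists>R. is_retract A r R \<and> iso (seg R r 0 1) r crown4_carrier crown4_rel"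
    then obtain R where "is_retract A r R" "iso (seg R r 0 1) r crown4_carrier crown4_rel" by blast
    then show "\<exists>T. is_retract (seg A r 2 (height A r)) r T \<and>
            card (level T r 0) = 2 \<and>
            (\<forall>x\<in>level T r 0. \<forall>y\<in>level T r 0. (x, y) \<notin> r)"
      using fwd[OF PA hor assms(3)] by blast
  next
    assume "\<exists>T. is_retract (seg A r 2 (height A r)) r T \<and>
            card (level T r 0) = 2 \<and>
            (\<forall>x\<in>level T r 0. \<forall>y\<in>level T r 0. (x, y) \<notin> r)"
    then obtain T where "is_retract (seg A r 2 (height A r)) r T" "card (level T r 0) = 2"
       "\<forall>x\<in>level T r 0. \<forall>y\<in>level T r 0. (x, y) \<notin> r" by blast
    then show "\<exists>R. is_retract A r R \<and> iso (seg R r 0 1) r crown4_carrier crown4_rel"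
      using bwd[OF PA hor assms(3)] by blast
  qed
qed

end
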